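(* Let $S_1,\dots,S_n$ be i.i.d. samples, $f(x;S)$ a loss, $f_i(x)=f(x;S_i)$, $F(x)=\mathbb{E}[f(x;S)]$, $\bar F(x)=\frac1n\sum_{i=1}^nf_i(x)$. Let $x_0=0,x_1,\dots,x_K$ be candidate models and let $\tau_1,\dots,\tau_K\ge0$ satisfy, for some $\delta\in(0,1)$, \[ \mathbb{P}\big(\exists k\in\{0,\dots,K\}:\ |F(x_k)-\bar F(x_k)-(F(0)-\bar F(0))|>\tau_k\big)\le\delta, \] with $\tau_0:=0$. Let $\gamma\in[1,\infty)$ and let $k_{\mathrm{rely}}$ be the output of the Reliable Model Selection procedure. Then with probability at least $1-\delta$, $F(x_{k_{\mathrm{rely}}})\le F(x_k)+(1+\gamma)\tau_k$ for all $k\in\{0,\dots,K\}$.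
   Context: Reliable Model Selection with parameter $\gamma\in[1,\infty)$, candidates $x_0,\dots,x_K$, samples $f_1,\dots,f_n$ and widths $\tau_1,\dots,\tau_K$ (with $\tau_0:=0$): set $\theta=\min_{k\in\{0,\dots,K\}}\bar F(x_k)+\gamma\tau_k$, set $\mathcal{F}=\{k\in\{0,\dots,K\}:\bar F(x_k)+\tau_k\le\theta\}$, and output $k_{\mathrm{rely}}\in\arg\min_{k\in\mathcal{F}}\bar F(x_k)$. *)

theory Defs
  imports "HOL-Probability.Probability"
begin

(* Population risk F(x) = E[f(x;S)], with S distributed like the first sample S 1 *)
definition pop_risk :: "'w measure \<Rightarrow> (nat \<Rightarrow> 'w \<Rightarrow> 's) \<Rightarrow> ('x \<Rightarrow> 's \<Rightarrow> real) \<Rightarrow> 'x \<Rightarrow> real" where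
  "pop_risk M S f x = (\<integral>\<omega>. f x (S 1 \<omega>) \<partial>M)"

definition emp_risk :: "nat \<Rightarrow> (nat \<Rightarrow> 'w \<Rightarrow> 's) \<Rightarrow> ('x \<Rightarrow> 's \<Rightarrow> real) \<Rightarrow> 'w \<Rightarrow> 'x \<Rightarrow> real" where
  "emp_risk n S f \<omega> x = (\<Sum>i=1..n. f x (S i \<omega>)) / real n"

(* Reliable Model Selection; Fb k = \<bar>F(x_k), tau k = \<tau>_k *)
definition rms_theta :: "real \<Rightarrow> nat \<Rightarrow> (nat \<Rightarrow> real) \<Rightarrow> (nat \<Rightarrow> real) \<Rightarrow> real" where
  "rms_theta \<gamma> K Fb tau = Min ((\<lambda>k. Fb k + \<gamma> * tau k) ` {0..K})"

definition rms_feasible :: "real \<Rightarrow> nat \<Rightarrow> (nat \<Rightarrow> real) \<Rightarrow> (nat \<Rightarrow> real) \<Rightarrow> nat set" where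
  "rms_feasible \<gamma> K Fb tau = {k \<in> {0..K}. Fb k + tau k \<le> rms_theta \<gamma> K Fb tau}"

definition rms_output :: "real \<Rightarrow> nat \<Rightarrow> (nat \<Rightarrow> real) \<Rightarrow> (nat \<Rightarrow> real) \<Rightarrow> nat \<Rightarrow> bool" where
  "rms_output \<gamma> K Fb tau k \<longleftrightarrow>
     k \<in> rms_feasible \<gamma> K Fb tau \<and> (\<forall>j \<in> rms_feasible \<gamma> K Fb tau. Fb k \<le> Fb j)"

end

theory Submission
  imports Defs
begin

theorem lemma1:
  fixes M :: "'w measure" and N :: "'s measure"
    and S :: "nat \<Rightarrow> 'w \<Rightarrow> 's" and f :: "'x::zero \<Rightarrow> 's \<Rightarrow> real"
    and n K :: nat and xs :: "nat \<Rightarrow> 'x" and tau :: "nat \<Rightarrow> real"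
    and \<delta> \<gamma> :: real and krely :: "'w \<Rightarrow> nat"
  assumes "prob_space M"
    and "n \<ge> 1"
    and "\<forall>i\<in>{1..n}. S i \<in> measurable M N"
    and "prob_space.indep_vars M (\<lambda>_. N) S {1..n}"
    and "\<forall>i\<in>{1..n}. distr M N (S i) = distr M N (S 1)"
    and "\<forall>x. f x \<in> borel_measurable N"
    and "xs 0 = 0"
    and "tau 0 = 0"
    and "\<forall>k\<in>{1..K}. tau k \<ge> 0"
    and "0 < \<delta>" and "\<delta> < 1"
    and "measure M {\<omega> \<in> space M. \<exists>k\<in>{0..K}.
            \<bar>pop_risk M S f (xs k) - emp_risk n S f \<omega> (xs k)
             - (pop_risk M S f 0 - emp_risk n S f \<omega> 0)\<bar> > tau k} \<le> \<delta>"
    and "\<gamma> \<ge> 1"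
    and "\<forall>\<omega>\<in>space M. rms_output \<gamma> K (\<lambda>k. emp_risk n S f \<omega> (xs k)) tau (krely \<omega>)"
  shows "\<exists>A\<in>sets M. measure M A \<ge> 1 - \<delta> \<and>
           (\<forall>\<omega>\<in>A. \<forall>k\<in>{0..K}.
              pop_risk M S f (xs (krely \<omega>)) \<le> pop_risk M S f (xs k) + (1 + \<gamma>) * tau k)"
proof -
  interpret P: prob_space M by fact
  define D where "D \<omega> k = pop_risk M S f (xs k) - emp_risk n S f \<omega> (xs k)
             - (pop_risk M S f 0 - emp_risk n S f \<omega> 0)" for \<omega> k
  define B where "B = {\<omega> \<in> space M. \<exists>k\<in>{0..K}. \<bar>D \<omega> k\<bar> > tau k}"
  have em: "(\<lambda>\<omega>. emp_risk n S f \<omega> x) \<in> borel_measurable M" for x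
  proof -
    have "(\<lambda>\<omega>. f x (S i \<omega>)) \<in> borel_measurable M" if "i \<in> {1..n}" for i
      using assms(3,6) that by (metis measurable_compose)
    then show ?thesis unfolding emp_risk_def by (intro borel_measurable_divide borel_measurable_sum) auto
  qed
  have Bm: "B \<in> sets M"
  proof -
    have "B = (\<Union>k\<in>{0..K}. {\<omega> \<in> space M. \<bar>D \<omega> k\<bar> > tau k})" unfolding B_def by auto
    also have "\<dots> \<in> sets M" unfolding D_def using em by (intro sets.finite_UN ballI borel_measurable_diff borel_measurable_abs borel_measurable_const pred_intros_logic borel_measurable_less predE measurable_const) auto
    finally show ?thesis .
  qed
  define A where "A = space M - B"
  have Am: "A \<in> sets M" unfolding A_def using Bm by auto
  have "measure M A = 1 - measure M B" unfolding A_def using Bm P.prob_compl by blast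
  moreover have "measure M B \<le> \<delta>" using assms(12) unfolding B_def D_def by simp
  ultimately have mA: "measure M A \<ge> 1 - \<delta>" by simp
  have "\<forall>\<omega>\<in>A. \<forall>k\<in>{0..K}.
              pop_risk M S f (xs (krely \<omega>)) \<le> pop_risk M S f (xs k) + (1 + \<gamma>) * tau k"
  proof (intro ballI)
    fix \<omega> k assume w: "\<omega> \<in> A" and k: "k \<in> {0..K}"
    define Fb where "Fb = (\<lambda>k. emp_risk n S f \<omega> (xs k))"
    have ws: "\<omega> \<in> space M" using w A_def by auto
    have good: "\<And>j. j \<in> {0..K} \<Longrightarrow> \<bar>D \<omega> j\<bar> \<le> tau j" using w unfolding A_def B_def by force
    have out: "rms_output \<gamma> K Fb tau (krely \<omega>)" using assms(14) ws Fb_def by auto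
    hence ks: "krely \<omega> \<in> {0..K}" and feas: "Fb (krely \<omega>) + tau (krely \<omega>) \<le> rms_theta \<gamma> K Fb tau"
      unfolding rms_output_def rms_feasible_def by auto
    have "rms_theta \<gamma> K Fb tau \<le> Fb k + \<gamma> * tau k"
      unfolding rms_theta_def using k by (intro Min_le) auto
    with feas good[OF ks] good[OF k] show "pop_risk M S f (xs (krely \<omega>)) \<le> pop_risk M S f (xs k) + (1 + \<gamma>) * tau k"
      unfolding D_def Fb_def by (simp add: algebra_simps abs_le_iff)
  qed
  with Am mA show ?thesis by blast
qed

end
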